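(* Let $a,b\in C^0(\mathbb{R})$ be even and positive, and let $G\in C^0(\mathbb{R})$ be even with $G(s)\ge G(M)=0$ for all $s\in\mathbb{R}$ and $G(s)>0$ for $s\in[0,M)$, for some $M>0$. Let $L>0$, $m\ge0$ and $t\in[0,L)$. Then $$\inf_{v\in H^1_m((-L,L))}\mathcal{E}(v,(-L,L))\le \frac{M^2+m^2}{\int_t^L 1/a}+2G_1\int_t^L b,$$ where $G_1:=\sup_{s\in(-m,\overline M)}G(s)$ and $\overline M:=\max\{m,M\}$.
   Context: $H^1_m((-L,L)):=\{u\in H^1((-L,L)):u(-L)=-m,\ u(L)=m\}$ and $\mathcal{E}(u,(-L,L)):=\int_{-L}^L\{\tfrac12(u')^2a(x)+G(u)b(x)\}\,dx$. *)

theory Defs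
  imports "HOL-Analysis.Analysis"
begin

text \<open>An element is represented by a pair (u, g) where g is the weak derivative of u:
  g is square integrable on (-L,L) and u(x) = u(-L) + integral of g from -L to x
  (absolutely continuous representative). The weak derivative is unique a.e.,
  so the energy below is well defined.\<close>

definition H1_m :: "real \<Rightarrow> real \<Rightarrow> ((real \<Rightarrow> real) \<times> (real \<Rightarrow> real)) set" where
  "H1_m L m = {(u, g). g \<in> borel_measurable lborel
      \<and> set_integrable lborel {-L..L} g
      \<and> set_integrable lborel {-L..L} (\<lambda>x. (g x)^2)
      \<and> u (-L) = -m
      \<and> (\<forall>x\<in>{-L..L}. u x = u (-L) + (LINT y:{-L..x}|lborel. g y))
      \<and> u L = m}"

definition energy :: "(real \<Rightarrow> real) \<Rightarrow> (real \<Rightarrow> real) \<Rightarrow> (real \<Rightarrow> real) \<Rightarrow> real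
    \<Rightarrow> (real \<Rightarrow> real) \<times> (real \<Rightarrow> real) \<Rightarrow> real" where
  "energy a b G L ug = (LINT x:{-L<..<L}|lborel.
      (1/2) * (snd ug x)^2 * a x + G (fst ug x) * b x)"

end

theory Submission imports Defs begin

lemma cont_si:
  fixes f :: "real \<Rightarrow> real"
  assumes "continuous_on UNIV f" "S \<in> sets lborel" "S \<subseteq> {c..d}"
  shows "set_integrable lborel S f"
proof -
  have "set_integrable lborel {c..d} f"
    unfolding set_integrable_def
    using borel_integrable_compact[of "{c..d}" f] continuous_on_subset[OF assms(1)] by auto
  then show ?thesis using set_integrable_subset assms by blast
qed

lemma split_int:
  fixes p q :: "real \<Rightarrow> real"
  assumes "set_integrable lborel (S \<inter> A1) p" "set_integrable lborel (S \<inter> A2) q"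
  shows "set_integrable lborel S (\<lambda>y. indicator A1 y * p y + indicator A2 y * q y)"
    and "(LINT y:S|lborel. indicator A1 y * p y + indicator A2 y * q y)
         = (LINT y:S \<inter> A1|lborel. p y) + (LINT y:S \<inter> A2|lborel. q y)"
proof -
  have eq: "(\<lambda>y. indicator S y *\<^sub>R (indicator A1 y * p y + indicator A2 y * q y))
     = (\<lambda>y. indicator (S \<inter> A1) y *\<^sub>R p y + indicator (S \<inter> A2) y *\<^sub>R q y)"
    by (auto simp: indicator_def fun_eq_iff)
  show "set_integrable lborel S (\<lambda>y. indicator A1 y * p y + indicator A2 y * q y)"
    using assms unfolding set_integrable_def eq by (rule Bochner_Integration.integrable_add)
  show "(LINT y:S|lborel. indicator A1 y * p y + indicator A2 y * q y)
         = (LINT y:S \<inter> A1|lborel. p y) + (LINT y:S \<inter> A2|lborel. q y)"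
    using assms unfolding set_integrable_def set_lebesgue_integral_def eq by (rule Bochner_Integration.integral_add)
qed

lemma si_mono:
  fixes f :: "real \<Rightarrow> real"
  assumes "S \<subseteq> T" "set_integrable lborel T f" "set_integrable lborel S f" "\<forall>x\<in>T. 0 \<le> f x"
  shows "(LINT x:S|lborel. f x) \<le> (LINT x:T|lborel. f x)"
  using assms unfolding set_integrable_def set_lebesgue_integral_def
  apply (intro integral_mono)
    apply (auto simp: indicator_def)
  done

lemma si_nonneg:
  fixes f :: "real \<Rightarrow> real"
  assumes "\<forall>x\<in>S. 0 \<le> f x"
  shows "0 \<le> (LINT x:S|lborel. f x)"
  unfolding set_lebesgue_integral_def
  by (rule integral_nonneg_AE) (use assms in \<open>auto simp: indicator_def\<close>)

lemma reflect:
  fixes f :: "real \<Rightarrow> real"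
  assumes "continuous_on UNIV f" "\<forall>x. f (-x) = f x" "0 \<le> t" "t \<le> L"
  shows "(LINT x:{-L..<-t}|lborel. f x) = (LINT x:{t..L}|lborel. f x)"
proof -
  have "(LINT x:{-L..<-t}|lborel. f x) = integral {-L..<-t} f"
    by (rule set_borel_integral_eq_integral(2)) (rule cont_si[OF assms(1), of _ "-L" "-t"], auto)
  also have "\<dots> = integral {-L..-t} f"
    by (rule integral_spike_set; rule negligible_subset[of "{-t}"]) auto
  also have "\<dots> = integral {-L..-t} (\<lambda>x. f (-x))"
    using assms(2) by simp
  also have "\<dots> = integral {t..L} f" by (rule Henstock_Kurzweil_Integration.integral_reflect_real)
  also have "\<dots> = (LINT x:{t..L}|lborel. f x)"
    by (rule set_borel_integral_eq_integral(2)[symmetric]) (rule cont_si[OF assms(1), of _ t L], auto)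
  finally show ?thesis .
qed

lemma pos_int:
  fixes f :: "real \<Rightarrow> real"
  assumes "continuous_on UNIV f" "\<forall>x. 0 < f x" "t < L"
  shows "0 < (LINT x:{t..L}|lborel. f x)"
proof -
  obtain x0 where x0: "x0 \<in> {t..L}" "\<forall>y\<in>{t..L}. f x0 \<le> f y"
    using continuous_attains_inf[of "{t..L}" f] continuous_on_subset[OF assms(1)] assms(3) by auto
  have "integral {t..L} (\<lambda>x. f x0) \<le> integral {t..L} f"
    by (rule integral_le) (use x0 continuous_on_subset[OF assms(1)] in \<open>auto intro: integrable_continuous_real\<close>)
  moreover have "integral {t..L} (\<lambda>x. f x0) > 0"
    using assms x0 by (simp add: integral_const_real)
  moreover have "(LINT x:{t..L}|lborel. f x) = integral {t..L} f"
    by (rule set_borel_integral_eq_integral(2)) (rule cont_si[OF assms(1), of _ t L], auto)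
  ultimately show ?thesis by linarith
qed

lemma sing_int:
  fixes f :: "real \<Rightarrow> real"
  assumes "continuous_on UNIV f"
  shows "(LINT x:{c..c}|lborel. f x) = 0"
proof -
  have "(LINT x:{c..c}|lborel. f x) = integral {c..c} f"
    by (rule set_borel_integral_eq_integral(2)) (rule cont_si[OF assms(1), of _ c c], auto)
  then show ?thesis by simp
qed

theorem proposition5p2:
  fixes a b G :: "real \<Rightarrow> real" and M L m t :: real
  assumes a_cont: "continuous_on UNIV a" and a_even: "\<forall>x. a (-x) = a x" and a_pos: "\<forall>x. a x > 0"
    and b_cont: "continuous_on UNIV b" and b_even: "\<forall>x. b (-x) = b x" and b_pos: "\<forall>x. b x > 0"
    and G_cont: "continuous_on UNIV G" and G_even: "\<forall>s. G (-s) = G s"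
    and M_pos: "M > 0" and GM: "G M = 0" and G_min: "\<forall>s. G s \<ge> G M"
    and G_pos: "\<forall>s\<in>{0..<M}. G s > 0"
    and L_pos: "L > 0" and m_nonneg: "m \<ge> 0" and t: "t \<in> {0..<L}"
  shows "Inf (energy a b G L ` H1_m L m)
     \<le> (M^2 + m^2) / (LINT x:{t..L}|lborel. 1 / a x)
        + 2 * Sup (G ` {-m<..<max m M}) * (LINT x:{t..L}|lborel. b x)"
proof -
  from t have t0: "0 \<le> t" and tL: "t < L" by auto
  have G0: "\<forall>s. 0 \<le> G s" using G_min GM by simp
  have ca: "\<And>c. continuous_on UNIV (\<lambda>x. c * (1 / a x))"
    by (intro continuous_intros a_cont) (use a_pos in \<open>auto simp: less_imp_neq[symmetric]\<close>)
  have ca2: "\<And>c. continuous_on UNIV (\<lambda>x. c * (1 / a x)^2)"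
    by (intro continuous_intros a_cont) (use a_pos in \<open>auto simp: less_imp_neq[symmetric]\<close>)
  have cab: "\<And>c d. continuous_on UNIV (\<lambda>x. c * (1 / a x) + d * b x)"
    by (intro continuous_intros a_cont b_cont) (use a_pos in \<open>auto simp: less_imp_neq[symmetric]\<close>)
  have cia: "continuous_on UNIV (\<lambda>x. 1 / a x)" using ca[of 1] by simp
  define I where "I = (LINT x:{t..L}|lborel. 1 / a x)"
  define B where "B = (LINT x:{t..L}|lborel. b x)"
  define G1 where "G1 = Sup (G ` {-m<..<max m M})"
  define A1 where "A1 = {-L..<-t}"
  define A2 where "A2 = {t..L}"
  have A1m: "A1 \<in> sets borel" and A2m: "A2 \<in> sets borel" by (simp_all add: A1_def A2_def)
  define c1 where "c1 = (M + m) / I"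
  define c2 where "c2 = (m - M) / I"
  define g where "g = (\<lambda>y. indicator A1 y * (c1 * (1 / a y)) + indicator A2 y * (c2 * (1 / a y)))"
  define u where "u = (\<lambda>x. -m + (LINT y:{-L..x}|lborel. g y))"
  have Ipos: "I > 0" unfolding I_def by (rule pos_int[OF cia]) (use a_pos tL in auto)
  have B0: "B \<ge> 0" unfolding B_def by (rule si_nonneg) (use b_pos in \<open>auto simp: less_imp_le\<close>)
  have c1I: "c1 * I = M + m" and c2I: "c2 * I = m - M" using Ipos by (auto simp: c1_def c2_def)
  have c1nn: "c1 \<ge> 0" using Ipos M_pos m_nonneg by (simp add: c1_def)
  have sI: "\<And>S (f::real\<Rightarrow>real). continuous_on UNIV f \<Longrightarrow> S \<in> sets lborel \<Longrightarrow> S \<subseteq> {-L..L} \<Longrightarrow> set_integrable lborel S f"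
    by (rule cont_si) auto
  have JA1: "(LINT y:A1|lborel. 1 / a y) = I"
    unfolding A1_def I_def by (rule reflect[OF cia]) (use a_even t0 tL in auto)
  have BA1: "(LINT y:A1|lborel. b y) = B"
    unfolding A1_def B_def by (rule reflect[OF b_cont]) (use b_even t0 tL in auto)
  have Jle: "0 \<le> (LINT y:S|lborel. 1 / a y) \<and> (LINT y:S|lborel. 1 / a y) \<le> I"
    if "S \<in> sets lborel" "S \<subseteq> A1 \<or> S \<subseteq> A2" for S
  proof
    show "0 \<le> (LINT y:S|lborel. 1 / a y)" by (rule si_nonneg) (use a_pos in \<open>auto simp: less_imp_le\<close>)
    from that(2) show "(LINT y:S|lborel. 1 / a y) \<le> I"
    proof
      assume "S \<subseteq> A1"
      then show ?thesis unfolding JA1[symmetric]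
        by (intro si_mono sI[OF cia]) (use that a_pos tL t0 in \<open>auto simp: A1_def less_imp_le subset_iff\<close>)
    next
      assume "S \<subseteq> A2"
      then show ?thesis unfolding I_def
        by (intro si_mono sI[OF cia]) (use that a_pos tL t0 in \<open>auto simp: A2_def less_imp_le subset_iff\<close>)
    qed
  qed
  have ug: "u x = -m + c1 * (LINT y:{-L..x} \<inter> A1|lborel. 1 / a y) + c2 * (LINT y:{-L..x} \<inter> A2|lborel. 1 / a y)"
    if "x \<in> {-L..L}" for x
  proof -
    have "(LINT y:{-L..x}|lborel. g y) = (LINT y:{-L..x} \<inter> A1|lborel. c1 * (1 / a y)) + (LINT y:{-L..x} \<inter> A2|lborel. c2 * (1 / a y))"
      unfolding g_def by (rule split_int(2); rule sI[OF ca]) (use that in \<open>auto simp: A1_def A2_def\<close>)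
    then show ?thesis unfolding u_def set_integral_mult_right by simp
  qed
  have empty_int: "(LINT y:{}|lborel. (f::real\<Rightarrow>real) y) = 0" for f
    by (simp add: set_lebesgue_integral_def)
  have urange: "-m \<le> u x \<and> u x \<le> max m M \<and> (-t \<le> x \<and> x < t \<longrightarrow> u x = M)"
    if x: "x \<in> {-L..L}" for x
  proof (cases "x < t")
    case True
    have e2: "{-L..x} \<inter> A2 = {}" using True by (auto simp: A2_def)
    define P1 where "P1 = (LINT y:{-L..x} \<inter> A1|lborel. 1 / a y)"
    have P1: "0 \<le> P1" "P1 \<le> I" using Jle[of "{-L..x} \<inter> A1"] unfolding P1_def by (auto simp: A1_def)
    have u1: "u x = -m + c1 * P1" using ug[OF x] e2 empty_int unfolding P1_def by simp
    have "c1 * P1 \<le> c1 * I" by (rule mult_left_mono) (use P1 c1nn in auto)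
    moreover have "0 \<le> c1 * P1" using P1 c1nn by simp
    moreover have "-t \<le> x \<longrightarrow> P1 = I"
    proof
      assume "-t \<le> x"
      then have "{-L..x} \<inter> A1 = A1" using tL by (auto simp: A1_def)
      then show "P1 = I" unfolding P1_def JA1[symmetric] by simp
    qed
    ultimately show ?thesis using u1 c1I by auto
  next
    case False
    have e1: "{-L..x} \<inter> A1 = A1" using False t0 tL by (auto simp: A1_def)
    define P2 where "P2 = (LINT y:{-L..x} \<inter> A2|lborel. 1 / a y)"
    have P2: "0 \<le> P2" "P2 \<le> I" using Jle[of "{-L..x} \<inter> A2"] unfolding P2_def by (auto simp: A2_def)
    have u2: "u x = M + c2 * P2" using ug[OF x] e1 JA1 c1I unfolding P2_def by simp
    show ?thesis
    proof (cases "m \<le> M")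
      case True
      then have "c2 \<le> 0" using Ipos by (simp add: c2_def divide_nonpos_pos)
      then have "c2 * I \<le> c2 * P2" "c2 * P2 \<le> 0" using P2 by (auto intro: mult_left_mono_neg mult_nonpos_nonneg)
      then show ?thesis using u2 c2I True False m_nonneg by auto
    next
      case F2: False
      then have "c2 \<ge> 0" using Ipos by (simp add: c2_def)
      then have "c2 * P2 \<le> c2 * I" "0 \<le> c2 * P2" using P2 by (auto intro: mult_left_mono)
      then show ?thesis using u2 c2I F2 False M_pos by auto
    qed
  qed
  have umL: "u (-L) = -m"
  proof -
    have "{-L..-L} \<inter> A2 = {}" "{-L..-L} \<inter> A1 = {-L..-L}" using t0 tL L_pos by (auto simp: A1_def A2_def)
    then show ?thesis using ug[of "-L"] L_pos empty_int sing_int[OF cia] by simp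
  qed
  have uL: "u L = m"
  proof -
    have "{-L..L} \<inter> A2 = A2" "{-L..L} \<inter> A1 = A1" using t0 tL L_pos by (auto simp: A1_def A2_def)
    moreover have "(LINT y:A2|lborel. 1 / a y) = I" by (simp add: A2_def I_def)
    ultimately show ?thesis using ug[of "L"] L_pos JA1 c1I c2I by simp
  qed
  have lt: "-m < max m M" using M_pos m_nonneg by auto
  have bddG: "bdd_above (G ` {-m<..<max m M})"
  proof -
    have "compact (G ` {-m..max m M})"
      by (rule compact_continuous_image) (use continuous_on_subset[OF G_cont] in auto)
    then have "bdd_above (G ` {-m..max m M})" by (intro bounded_imp_bdd_above compact_imp_bounded)
    then show ?thesis by (rule bdd_above_mono) auto
  qed
  have GleG1: "G s \<le> G1" if "s \<in> {-m..max m M}" for s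
  proof (rule continuous_le_on_closure[of "{-m<..<max m M}" G s G1])
    show "continuous_on (closure {- m<..<max m M}) G" using continuous_on_subset[OF G_cont] by auto
    show "s \<in> closure {- m<..<max m M}" using that closure_greaterThanLessThan[OF lt] by simp
    show "\<And>x. x \<in> {- m<..<max m M} \<Longrightarrow> G x \<le> G1"
      unfolding G1_def by (rule cSup_upper) (use bddG in auto)
  qed
  have G1nn: "G1 \<ge> 0"
  proof -
    have "G (-m) \<le> G1" using lt by (intro GleG1) auto
    then show ?thesis using G0 by (metis order_trans)
  qed
  have gmeas: "g \<in> borel_measurable lborel"
  proof -
    have "(\<lambda>x. 1 / a x) \<in> borel_measurable borel" by (rule borel_measurable_continuous_onI[OF cia])
    then show ?thesis unfolding g_def A1_def A2_def by measurable
  qed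
  have disj: "A1 \<inter> A2 = {}" using t0 by (auto simp: A1_def A2_def)
  have gsq: "(g x)^2 = indicator A1 x * (c1^2 * (1 / a x)^2) + indicator A2 x * (c2^2 * (1 / a x)^2)" for x
    using disj by (auto simp: g_def indicator_def power_divide)
  have mem: "(u, g) \<in> H1_m L m"
    unfolding H1_m_def
  proof (simp only: mem_Collect_eq case_prod_conv, intro conjI)
    show "g \<in> borel_measurable lborel" by (rule gmeas)
    show "set_integrable lborel {-L..L} g"
      unfolding g_def by (rule split_int(1); rule sI[OF ca]) (auto simp: A1_def A2_def)
    show "set_integrable lborel {-L..L} (\<lambda>x. (g x)^2)"
      unfolding gsq by (rule split_int(1); rule sI[OF ca2]) (auto simp: A1_def A2_def)
    show "u (-L) = -m" by (rule umL)
    show "u L = m" by (rule uL)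
    show "\<forall>x\<in>{-L..L}. u x = u (-L) + (LINT y:{-L..x}|lborel. g y)" using umL by (simp add: u_def)
  qed
  define F where "F = (\<lambda>x. (1/2) * (g x)^2 * a x + G (u x) * b x)"
  define H where "H = (\<lambda>x. indicator A1 x * ((1/2*c1^2) * (1 / a x) + G1 * b x)
                         + indicator A2 x * ((1/2*c2^2) * (1 / a x) + G1 * b x))"
  have E: "energy a b G L (u, g) = (LINT x:{-L<..<L}|lborel. F x)"
    by (simp add: energy_def F_def)
  have Hnn: "0 \<le> H x" for x
  proof -
    have ax: "0 < a x" "0 < b x" using a_pos b_pos by auto
    show ?thesis unfolding H_def
      by (intro add_nonneg_nonneg mult_nonneg_nonneg) (use ax G1nn in auto)
  qed
  have FH: "F x \<le> H x" if x: "x \<in> {-L<..<L}" for x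
  proof -
    have ur: "G (u x) \<le> G1" using urange[of x] x by (intro GleG1) auto
    then have Gb: "G (u x) * b x \<le> G1 * b x" using b_pos by (simp add: less_imp_le mult_right_mono)
    have ax: "a x \<noteq> 0" using a_pos by (metis less_irrefl)
    have sq: "\<And>c. (1/2) * (c * (1 / a x))^2 * a x = (1/2*c^2) * (1 / a x)"
      using ax by (simp add: power2_eq_square field_simps)
    consider "x \<in> A1" | "x \<in> A2" | "x \<notin> A1" "x \<notin> A2" by blast
    then show ?thesis
    proof cases
      case 1
      then have "x \<notin> A2" using disj by auto
      then show ?thesis using 1 Gb sq unfolding F_def H_def g_def by simp
    next
      case 2
      then have "x \<notin> A1" using disj by auto
      then show ?thesis using 2 Gb sq unfolding F_def H_def g_def by simp
    next
      case 3
      then have "-t \<le> x" "x < t" using x by (auto simp: A1_def A2_def)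
      then have "u x = M" using urange[of x] x by auto
      then show ?thesis using 3 GM Hnn[of x] unfolding F_def g_def by simp
    qed
  qed
  have HiC: "set_integrable lborel {-L..L} H"
    unfolding H_def by (rule split_int(1); rule sI[OF cab]) (auto simp: A1_def A2_def)
  have HiO: "set_integrable lborel {-L<..<L} H"
    by (rule set_integrable_subset[OF HiC]) auto
  have intH: "(LINT x:{-L..L}|lborel. H x) = (1/2*c1^2) * I + G1 * B + ((1/2*c2^2) * I + G1 * B)"
  proof -
    have s1: "{-L..L} \<inter> A1 = A1" "{-L..L} \<inter> A2 = A2" using t0 tL by (auto simp: A1_def A2_def)
    have i1: "set_integrable lborel A1 (\<lambda>x. 1 / a x)" "set_integrable lborel A1 b"
      "set_integrable lborel A2 (\<lambda>x. 1 / a x)" "set_integrable lborel A2 b"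
      using t0 tL by (auto intro!: sI cia b_cont simp: A1_def A2_def)
    have e1: "(LINT x:A1|lborel. (1/2*c1^2) * (1 / a x) + G1 * b x) = (1/2*c1^2) * I + G1 * B"
      unfolding JA1[symmetric] BA1[symmetric]
      by (simp only: set_integral_add(2)[OF set_integrable_mult_right[OF i1(1)] set_integrable_mult_right[OF i1(2)]] set_integral_mult_right)
    have e2: "(LINT x:A2|lborel. (1/2*c2^2) * (1 / a x) + G1 * b x) = (1/2*c2^2) * I + G1 * B"
      unfolding I_def B_def A2_def[symmetric]
      by (simp only: set_integral_add(2)[OF set_integrable_mult_right[OF i1(3)] set_integrable_mult_right[OF i1(4)]] set_integral_mult_right)
    have "(LINT x:{-L..L}|lborel. H x) = (LINT x:{-L..L} \<inter> A1|lborel. (1/2*c1^2) * (1 / a x) + G1 * b x)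
       + (LINT x:{-L..L} \<inter> A2|lborel. (1/2*c2^2) * (1 / a x) + G1 * b x)"
      unfolding H_def by (rule split_int(2); rule sI[OF cab]) (use A1m A2m in auto)
    also have "\<dots> = (LINT x:A1|lborel. (1/2*c1^2) * (1 / a x) + G1 * b x)
       + (LINT x:A2|lborel. (1/2*c2^2) * (1 / a x) + G1 * b x)"
      unfolding s1 ..
    also have "\<dots> = (1/2*c1^2) * I + G1 * B + ((1/2*c2^2) * I + G1 * B)"
      by (simp only: e1 e2)
    finally show ?thesis .
  qed
  have alg: "(1/2*c1^2) * I + G1 * B + ((1/2*c2^2) * I + G1 * B) = (M^2 + m^2) / I + 2 * G1 * B"
    using Ipos unfolding c1_def c2_def by (simp add: field_simps power2_eq_square)
  have rhs_nn: "0 \<le> (M^2 + m^2) / I + 2 * G1 * B" using Ipos G1nn B0 by simp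
  have Ebound: "energy a b G L (u, g) \<le> (M^2 + m^2) / I + 2 * G1 * B"
  proof (cases "set_integrable lborel {-L<..<L} F")
    case True
    have "(LINT x:{-L<..<L}|lborel. F x) \<le> (LINT x:{-L<..<L}|lborel. H x)"
      by (rule set_integral_mono[OF True HiO FH])
    also have "\<dots> \<le> (LINT x:{-L..L}|lborel. H x)"
      by (rule si_mono[OF _ HiC HiO]) (use Hnn in auto)
    finally show ?thesis using E intH alg by (simp add: algebra_simps)
  next
    case False
    then have "(LINT x:{-L<..<L}|lborel. F x) = 0"
      unfolding set_integrable_def set_lebesgue_integral_def by (rule not_integrable_integral_eq)
    then show ?thesis using E rhs_nn by simp
  qed
  have bdd: "bdd_below (energy a b G L ` H1_m L m)"
  proof (rule bdd_belowI[of _ 0])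
    fix e assume "e \<in> energy a b G L ` H1_m L m"
    then obtain ug where "e = energy a b G L ug" by auto
    moreover have "0 \<le> energy a b G L ug" unfolding energy_def
    proof (rule si_nonneg, intro ballI)
      fix x
      have "0 < a x" "0 < b x" "0 \<le> G (fst ug x)" using a_pos b_pos G0 by auto
      then show "0 \<le> 1/2 * (snd ug x)^2 * a x + G (fst ug x) * b x" by simp
    qed
    ultimately show "0 \<le> e" by simp
  qed
  have "Inf (energy a b G L ` H1_m L m) \<le> energy a b G L (u, g)"
    by (rule cInf_lower[OF imageI[OF mem] bdd])
  then show ?thesis using Ebound unfolding I_def B_def G1_def by simp
qed
end
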